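(* Let $\widehat G$ be a countable discrete abelian group, $m$ a probability measure on $\widehat G$ with $m(\{\chi\})>0$ for all $\chi$, and $m^{\mathbf D}$ the product measure on $\widehat G^{\mathbf D}$. For $g,g'\in\widehat G_{fr}$, the measures $g_*m^{\mathbf D}$ and $g'_*m^{\mathbf D}$ are mutually singular if and only if there exists $d\in\mathbf D$ with $g(d)_*m\ne g'(d)_*m$; otherwise they are equal. If $\widehat G$ is torsion free, then the measures $g_*m^{\mathbf D}$, $g\in\widehat G_{fr}$, are pairwise mutually singular (for distinct $g$).
   Context: $\mathbf D=\{a/2^n:n\ge1,0\le a\le2^n-1\}\subset[0,1)$. A standard dyadic partition (s.d.p.) is $0=d_1<\dots<d_{n+1}=1$ with each $(d_j,d_{j+1})$ of the form $(a/2^k,(a+1)/2^k)$. $\widehat G_{fr}$ is the group (pointwise multiplication) of maps $g:\mathbf D\to\widehat G$ for which there is an s.d.p. such that $g$ is constant on each $[d_j,d_{j+1})\cap\mathbf D$. $\widehat G_{fr}$ acts on $\widehat G^{\mathbf D}$ by $(gy)(d)=g(d)y(d)$, and $g_*m^{\mathbf D}$ is the pushforward of $m^{\mathbf D}$ under $y\mapsto gy$; for $\chi\in\widehat G$, $\chi_*m$ is the pushforward of $m$ under translation by $\chi$. *)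

theory Defs
  imports "HOL-Probability.Probability"
begin

definition dyadics :: "real set" where
  "dyadics = {real a / 2 ^ n | a n. 1 \<le> n \<and> a \<le> 2 ^ n - 1}"

definition std_dyadic_partition :: "real list \<Rightarrow> bool" where
  "std_dyadic_partition ds \<longleftrightarrow>
     2 \<le> length ds \<and> ds ! 0 = 0 \<and> last ds = 1 \<and>
     (\<forall>j. j + 1 < length ds \<longrightarrow> ds ! j < ds ! (j + 1) \<and>
        (\<exists>a k::nat. ds ! j = real a / 2 ^ k \<and> ds ! (j + 1) = (real a + 1) / 2 ^ k))"

definition Gfr :: "(real \<Rightarrow> 'g) set" where
  "Gfr = {g. g \<in> extensional dyadics \<and>
          (\<exists>ds. std_dyadic_partition ds \<and>
             (\<forall>j. j + 1 < length ds \<longrightarrow>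
                (\<exists>c. \<forall>d\<in>dyadics. ds ! j \<le> d \<and> d < ds ! (j + 1) \<longrightarrow> g d = c)))}"

definition prodD :: "'g measure \<Rightarrow> (real \<Rightarrow> 'g) measure" where
  "prodD m = PiM dyadics (\<lambda>_. m)"

text \<open>Push-forward g_* m^D under y \<mapsto> g y, (g y)(d) = g(d) y(d) (group written additively).\<close>
definition push_fr :: "(real \<Rightarrow> 'g::ab_group_add) \<Rightarrow> 'g measure \<Rightarrow> (real \<Rightarrow> 'g) measure" where
  "push_fr g m = distr (prodD m) (prodD m) (\<lambda>y. \<lambda>d\<in>dyadics. g d + y d)"

definition translate :: "'g::ab_group_add \<Rightarrow> 'g measure \<Rightarrow> 'g measure" where
  "translate c m = distr m m (\<lambda>x. c + x)"

definition mutually_singular :: "'a measure \<Rightarrow> 'a measure \<Rightarrow> bool" where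
  "mutually_singular M N \<longleftrightarrow>
     (\<exists>A \<in> sets M. A \<in> sets N \<and> emeasure M A = 0 \<and> emeasure N (space N - A) = 0)"

definition torsion_free :: "'g::ab_group_add itself \<Rightarrow> bool" where
  "torsion_free _ \<longleftrightarrow> (\<forall>(x::'g) (n::nat). 0 < n \<longrightarrow> (\<Sum>i<n. x) = 0 \<longrightarrow> x = 0)"

end

theory Submission
  imports Defs "HOL-Probability.Hoeffding"
begin

lemma space_PiM_UNIV_count:
  assumes "sets \<mu> = sets (count_space UNIV)"
  shows "space (PiM I (\<lambda>_. \<mu>)) = (\<Pi>\<^sub>E i\<in>I. UNIV)"
  using sets_eq_imp_space_eq[OF assms] by (simp add: space_PiM)

lemma coord_indep:
  assumes mu: "prob_space \<mu>" and s: "sets \<mu> = sets (count_space UNIV)"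
  shows "prob_space.indep_vars (PiM UNIV (\<lambda>_::nat. \<mu>)) (\<lambda>_. count_space UNIV) (\<lambda>i y. y i) UNIV"
proof -
  interpret Q: prob_space "PiM UNIV (\<lambda>_::nat. \<mu>)" by (rule prob_space_PiM) (use mu in auto)
  have rv: "(\<lambda>y. y i) \<in> measurable (PiM UNIV (\<lambda>_::nat. \<mu>)) (count_space UNIV)" for i
    using measurable_component_singleton[of i UNIV "\<lambda>_. \<mu>"] s
    by (simp add: measurable_cong_sets[OF refl s[symmetric]])
  have "distr (PiM UNIV (\<lambda>_::nat. \<mu>)) (PiM UNIV (\<lambda>_. count_space UNIV)) (\<lambda>x. \<lambda>i\<in>UNIV. x i)
      = PiM UNIV (\<lambda>_::nat. \<mu>)"
    using distr_id2[of "PiM UNIV (\<lambda>_. count_space UNIV)" "PiM UNIV (\<lambda>_::nat. \<mu>)"]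
    by (simp add: sets_PiM_cong s restrict_def)
  moreover have "distr (PiM UNIV (\<lambda>_::nat. \<mu>)) (count_space UNIV) (\<lambda>y. y i) = \<mu>" for i
  proof -
    have "distr (PiM UNIV (\<lambda>_::nat. \<mu>)) (count_space UNIV) (\<lambda>y. y i)
       = distr (PiM UNIV (\<lambda>_::nat. \<mu>)) \<mu> (\<lambda>y. y i)"
      by (rule distr_cong) (auto simp: s)
    also have "\<dots> = \<mu>" by (rule distr_PiM_component) (use mu in auto)
    finally show ?thesis .
  qed
  ultimately show ?thesis
    by (subst Q.indep_vars_iff_distr_eq_PiM') (use rv in auto)
qed

lemma hoeff_bound:
  fixes P :: "'a measure"
  assumes mu: "prob_space P" and s: "sets P = sets (count_space UNIV)" and eps: "\<epsilon> > 0"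
  shows "measure (PiM UNIV (\<lambda>_::nat. P))
     {y\<in>space (PiM UNIV (\<lambda>_::nat. P)). \<epsilon> \<le> \<bar>(\<Sum>i<Suc n. indicator {x} (y i)) / real (Suc n) - measure P {x}\<bar>}
     \<le> 2 * exp (-2 * real (Suc n) * \<epsilon>\<^sup>2)"
proof -
  let ?Q = "PiM UNIV (\<lambda>_::nat. P)"
  define X where "X = (\<lambda>(i::nat) y. indicator {x} (y i) :: real)"
  interpret Q: prob_space ?Q by (rule prob_space_PiM) (use mu in auto)
  interpret mu: prob_space P by (rule mu)
  have meas_ind: "(indicator {x} :: 'a \<Rightarrow> real) \<in> measurable P borel"
    by (simp add: measurable_cong_sets[OF s refl])
  have comp: "(\<lambda>y. y i) \<in> measurable ?Q P" for i
    by (rule measurable_component_singleton) simp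
  have ind0: "Q.indep_vars (\<lambda>_. borel) X UNIV"
    unfolding X_def
    by (rule Q.indep_vars_compose2[OF coord_indep[OF mu s]]) simp
  have indep: "Q.indep_vars (\<lambda>_. borel) X {..<Suc n}"
    by (rule Q.indep_vars_subset[OF ind0]) simp
  have dX: "distr ?Q borel (X i) = distr P borel (indicator {x})" for i
  proof -
    have "distr ?Q borel (X i) = distr ?Q borel (indicator {x} \<circ> (\<lambda>y. y i))"
      by (simp add: X_def o_def)
    also have "\<dots> = distr (distr ?Q P (\<lambda>y. y i)) borel (indicator {x})"
      by (rule distr_distr[symmetric, OF meas_ind comp])
    also have "distr ?Q P (\<lambda>y. y i) = P"
      by (rule distr_PiM_component) (use mu in auto)
    finally show ?thesis .
  qed
  have rvX: "X i \<in> borel_measurable ?Q" for i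
    unfolding X_def using measurable_comp[OF comp meas_ind] by (simp add: o_def)
  interpret H: Hoeffding_ineq_iid ?Q "{..<Suc n}" X "X 0" 0 1 "Q.expectation (X 0)"
  proof unfold_locales
    show "distr ?Q borel (X i) = distr ?Q borel (X 0)" for i by (simp add: dX)
    show "AE y in ?Q. X 0 y \<in> {0..1}" by (simp add: X_def indicator_def)
  qed (use indep rvX in auto)
  have "Q.expectation (X 0) = integral\<^sup>L (distr ?Q P (\<lambda>y. y 0)) (indicator {x})"
    unfolding X_def by (rule integral_distr[symmetric, OF comp meas_ind])
  also have "distr ?Q P (\<lambda>y. y 0) = P"
    by (rule distr_PiM_component) (use mu in auto)
  also have "integral\<^sup>L P (indicator {x} :: 'a \<Rightarrow> real) = measure P {x}"
    using s by (simp add: mu.emeasure_eq_measure)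
  finally have E: "Q.expectation (X 0) = measure P {x}" .
  have eps0: "\<epsilon> \<ge> 0" using eps by simp
  have ne: "{..<Suc n} \<noteq> {}" by auto
  from H.Hoeffding_ineq_abs_ge'[OF eps0 _ ne] show ?thesis
    unfolding E by (simp add: X_def)
qed

lemma iid_singular:
  fixes P Q :: "'a::countable measure"
  assumes P: "prob_space P" and Q: "prob_space Q"
    and sP: "sets P = sets (count_space UNIV)" and sQ: "sets Q = sets (count_space UNIV)"
    and ne: "P \<noteq> Q"
  shows "\<exists>A\<in>sets (PiM UNIV (\<lambda>_::nat. P)). emeasure (PiM UNIV (\<lambda>_::nat. P)) A = 0 \<and>
            emeasure (PiM UNIV (\<lambda>_::nat. Q)) (space (PiM UNIV (\<lambda>_::nat. Q)) - A) = 0"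
proof -
  interpret P: prob_space P by (rule P)
  interpret Q: prob_space Q by (rule Q)
  let ?PP = "PiM UNIV (\<lambda>_::nat. P)" and ?QQ = "PiM UNIV (\<lambda>_::nat. Q)"
    and ?CC = "PiM UNIV (\<lambda>_::nat. count_space (UNIV::'a set))"
  interpret PP: prob_space ?PP by (rule prob_space_PiM) (use P in auto)
  interpret QQ: prob_space ?QQ by (rule prob_space_PiM) (use Q in auto)
  have setsP: "sets ?PP = sets ?CC" by (rule sets_PiM_cong) (auto simp: sP)
  have setsQ: "sets ?QQ = sets ?CC" by (rule sets_PiM_cong) (auto simp: sQ)
  have spP: "space ?PP = space ?CC" by (rule sets_eq_imp_space_eq[OF setsP])
  have spQ: "space ?QQ = space ?CC" by (rule sets_eq_imp_space_eq[OF setsQ])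
  obtain x where x: "measure P {x} \<noteq> measure Q {x}"
  proof (rule ccontr)
    assume "\<not> thesis"
    with that have "\<And>x. measure P {x} = measure Q {x}" by blast
    then have "P = Q"
      by (intro measure_eqI_countable[where A=UNIV]) (auto simp: sP sQ P.emeasure_eq_measure Q.emeasure_eq_measure)
    with ne show False by simp
  qed
  define p where "p = measure P {x}"
  define q where "q = measure Q {x}"
  define \<epsilon> where "\<epsilon> = \<bar>p - q\<bar> / 2"
  have eps: "\<epsilon> > 0" using x by (simp add: \<epsilon>_def p_def q_def)
  define S where "S = (\<lambda>(n::nat) (y::nat \<Rightarrow> 'a). (\<Sum>i<Suc n. indicator {x} (y i)) / real (Suc n) :: real)"
  define B where "B = (\<lambda>r n. {y\<in>space ?CC. \<epsilon> \<le> \<bar>S n y - r\<bar>})"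
  have Bsets: "B r n \<in> sets ?CC" for r n
    unfolding B_def S_def by measurable
  have sum_bound: "summable (\<lambda>n::nat. 2 * exp (-2 * real (Suc n) * \<epsilon>\<^sup>2))"
  proof -
    have "summable (\<lambda>n::nat. 2 * exp (-2 * \<epsilon>\<^sup>2) * exp (-2 * \<epsilon>\<^sup>2) ^ n)"
      by (intro summable_mult summable_geometric) (use eps in simp)
    moreover have "2 * exp (-2 * real (Suc n) * \<epsilon>\<^sup>2) = 2 * exp (-2 * \<epsilon>\<^sup>2) * exp (-2 * \<epsilon>\<^sup>2) ^ n" for n
      by (simp add: exp_of_nat_mult[symmetric] exp_add[symmetric] algebra_simps)
    ultimately show ?thesis by simp
  qed
  have nullP: "limsup (B p) \<in> null_sets ?PP"
  proof (rule borel_cantelli_limsup1)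
    show "B p n \<in> sets ?PP" for n using Bsets setsP by simp
    show "emeasure ?PP (B p n) < \<infinity>" for n by (simp add: PP.emeasure_eq_measure)
    show "summable (\<lambda>n. measure ?PP (B p n))"
    proof (rule summable_comparison_test'[OF sum_bound])
      fix n
      have "measure ?PP (B p n) \<le> 2 * exp (-2 * real (Suc n) * \<epsilon>\<^sup>2)"
        using hoeff_bound[OF P sP eps, where n=n and x=x] unfolding B_def S_def p_def spP by simp
      then show "norm (measure ?PP (B p n)) \<le> 2 * exp (-2 * real (Suc n) * \<epsilon>\<^sup>2)" by simp
    qed
  qed
  have nullQ: "limsup (B q) \<in> null_sets ?QQ"
  proof (rule borel_cantelli_limsup1)
    show "B q n \<in> sets ?QQ" for n using Bsets setsQ by simp
    show "emeasure ?QQ (B q n) < \<infinity>" for n by (simp add: QQ.emeasure_eq_measure)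
    show "summable (\<lambda>n. measure ?QQ (B q n))"
    proof (rule summable_comparison_test'[OF sum_bound])
      fix n
      have "measure ?QQ (B q n) \<le> 2 * exp (-2 * real (Suc n) * \<epsilon>\<^sup>2)"
        using hoeff_bound[OF Q sQ eps, where n=n and x=x] unfolding B_def S_def q_def spQ by simp
      then show "norm (measure ?QQ (B q n)) \<le> 2 * exp (-2 * real (Suc n) * \<epsilon>\<^sup>2)" by simp
    qed
  qed
  have sub: "space ?QQ - limsup (B p) \<subseteq> limsup (B q)"
  proof
    fix y assume y: "y \<in> space ?QQ - limsup (B p)"
    then obtain N where N: "\<And>m. m \<ge> N \<Longrightarrow> y \<notin> B p m"
      by (auto simp: limsup_INF_SUP)
    have "\<exists>m\<ge>n. y \<in> B q m" for n
    proof (intro exI conjI)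
      show "max n N \<ge> n" by simp
      have "y \<notin> B p (max n N)" by (rule N) simp
      with y spQ have "\<bar>S (max n N) y - p\<bar> < \<epsilon>" by (auto simp: B_def)
      then have "\<epsilon> \<le> \<bar>S (max n N) y - q\<bar>" unfolding \<epsilon>_def by (auto simp: abs_if split: if_splits)
      with y spQ show "y \<in> B q (max n N)" by (auto simp: B_def)
    qed
    then show "y \<in> limsup (B q)" by (auto simp: limsup_INF_SUP)
  qed
  show ?thesis
  proof (intro bexI conjI)
    show "emeasure ?PP (limsup (B p)) = 0" using nullP by auto
    show "limsup (B p) \<in> sets ?PP" using nullP by auto
    have "emeasure ?QQ (space ?QQ - limsup (B p)) \<le> emeasure ?QQ (limsup (B q))"
      by (rule emeasure_mono[OF sub]) (use nullQ in auto)
    then show "emeasure ?QQ (space ?QQ - limsup (B p)) = 0" using nullQ by auto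
  qed
qed

lemma translate_sets: "sets (translate c m) = sets m"
  by (simp add: translate_def)

lemma push_eq:
  fixes m :: "'g::ab_group_add measure"
  assumes mP: "prob_space m" and s: "sets m = sets (count_space UNIV)"
  shows "push_fr g m = PiM dyadics (\<lambda>d. translate (g d) m)"
proof -
  have spm: "space m = UNIV" using sets_eq_imp_space_eq[OF s] by simp
  have meas_all: "f \<in> measurable m m" for f :: "'g \<Rightarrow> 'g"
    by (simp add: measurable_cong_sets[OF s s])
  have tP: "prob_space (translate c m)" for c
    unfolding translate_def by (rule prob_space.prob_space_distr[OF mP meas_all])
  let ?M = "\<lambda>d. translate (g d) m"
  let ?f = "\<lambda>y. \<lambda>d\<in>dyadics. g d + y d"
  have setsP: "sets (PiM dyadics ?M) = sets (prodD m)"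
    unfolding prodD_def by (rule sets_PiM_cong) (auto simp: translate_sets)
  have fmeas: "?f \<in> measurable (prodD m) (prodD m)"
    unfolding prodD_def
  proof (rule measurable_PiM_single')
    fix d assume "d \<in> dyadics"
    have "(\<lambda>y. y d) \<in> measurable (PiM dyadics (\<lambda>_. m)) m"
      by (rule measurable_component_singleton) fact
    from measurable_comp[OF this meas_all[of "\<lambda>x. g d + x"]]
    show "(\<lambda>y. (\<lambda>d\<in>dyadics. g d + y d) d) \<in> measurable (PiM dyadics (\<lambda>_. m)) m"
      using \<open>d \<in> dyadics\<close> by (simp add: o_def)
  next
    show "(\<lambda>y. \<lambda>d\<in>dyadics. g d + y d) \<in> space (PiM dyadics (\<lambda>_. m)) \<rightarrow> (\<Pi>\<^sub>E i\<in>dyadics. space m)"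
      by (auto simp: spm)
  qed
  interpret PP: prob_space "PiM dyadics ?M" by (rule prob_space_PiM) (use tP in auto)
  show ?thesis
    unfolding push_fr_def
  proof (rule measure_eqI_PiM_infinite[where I=dyadics and M="?M"])
    show "sets (distr (prodD m) (prodD m) ?f) = sets (PiM dyadics ?M)" using setsP by simp
    show "sets (PiM dyadics ?M) = sets (PiM dyadics ?M)" by simp
    show "finite_measure (distr (prodD m) (prodD m) ?f)"
      by (rule prob_space.finite_measure, rule prob_space.prob_space_distr[OF _ fmeas])
         (unfold prodD_def, rule prob_space_PiM, use mP in auto)
    fix A J assume J: "finite J" "J \<subseteq> dyadics" and A: "\<And>i. i \<in> J \<Longrightarrow> A i \<in> sets (?M i)"
    have Asets: "A i \<in> sets (count_space UNIV)" if "i \<in> J" for i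
      using A[OF that] by (simp add: translate_sets s)
    have E: "prod_emb dyadics ?M J (Pi\<^sub>E J A) \<in> sets (prodD m)"
      using setsP J A by (auto intro!: sets_PiM_I)
    have pre: "?f -` prod_emb dyadics ?M J (Pi\<^sub>E J A) \<inter> space (prodD m)
        = prod_emb dyadics (\<lambda>_. m) J (Pi\<^sub>E J (\<lambda>j. (\<lambda>x. g j + x) -` A j))"
      using J by (auto simp: prod_emb_def PiE_iff space_PiM prodD_def spm translate_def subset_eq)
    have "emeasure (distr (prodD m) (prodD m) ?f) (prod_emb dyadics ?M J (Pi\<^sub>E J A))
        = emeasure (prodD m) (prod_emb dyadics (\<lambda>_. m) J (Pi\<^sub>E J (\<lambda>j. (\<lambda>x. g j + x) -` A j)))"
      by (subst emeasure_distr[OF fmeas E]) (simp add: pre)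
    also have "\<dots> = (\<Prod>j\<in>J. emeasure m ((\<lambda>x. g j + x) -` A j))"
      unfolding prodD_def by (rule emeasure_PiM_emb) (use mP J s in auto)
    also have "\<dots> = (\<Prod>j\<in>J. emeasure (?M j) (A j))"
    proof (rule prod.cong[OF refl])
      fix j assume "j \<in> J"
      then show "emeasure m ((\<lambda>x. g j + x) -` A j) = emeasure (?M j) (A j)"
        unfolding translate_def using Asets
        by (subst emeasure_distr[OF meas_all]) (auto simp: s spm)
    qed
    also have "\<dots> = emeasure (PiM dyadics ?M) (prod_emb dyadics ?M J (Pi\<^sub>E J A))"
      by (rule emeasure_PiM_emb[symmetric]) (use tP J A in auto)
    finally show "emeasure (distr (prodD m) (prodD m) ?f) (prod_emb dyadics ?M J (Pi\<^sub>E J A))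
        = emeasure (PiM dyadics ?M) (prod_emb dyadics ?M J (Pi\<^sub>E J A))" .
  qed
qed

lemma dyadics_range: "d \<in> dyadics \<Longrightarrow> 0 \<le> d \<and> d < 1"
proof -
  assume "d \<in> dyadics"
  then obtain a n :: nat where d: "d = real a / 2 ^ n" "1 \<le> n" "a \<le> 2 ^ n - 1"
    by (auto simp: dyadics_def)
  have "(0::nat) < 2 ^ n" by simp
  then have "a < 2 ^ n" using d(3) by linarith
  then have "real a < real (2 ^ n)" by (simp only: of_nat_less_iff)
  then have "real a < 2 ^ n" by simp
  then show ?thesis using d by (simp add: divide_less_eq)
qed

lemma dyadic_seq:
  assumes d: "d \<in> dyadics" and h: "d < h"
  shows "\<exists>e::nat \<Rightarrow> real. inj e \<and> (\<forall>i. e i \<in> dyadics \<and> d < e i \<and> e i < h)"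
proof -
  obtain a n :: nat where dd: "d = real a / 2 ^ n" "1 \<le> n" "a \<le> 2 ^ n - 1"
    using d by (auto simp: dyadics_def)
  obtain N where N: "(1/2::real) ^ N < min (h - d) 1" using real_arch_pow_inv[of "min (h - d) 1" "1/2"] h by auto
  define K where "K = N + n"
  define e where "e = (\<lambda>i::nat. d + 1 / 2 ^ (K + i) :: real)"
  have small: "1 / 2 ^ (K + i) < min (h - d) 1" for i
  proof -
    have "(1::real) / 2 ^ (K + i) = (1/2) ^ (K + i)" by (simp add: power_one_over)
    also have "\<dots> \<le> (1/2) ^ N" by (rule power_decreasing) (auto simp: K_def)
    finally show ?thesis using N by linarith
  qed
  have "inj e"
  proof (rule injI)
    fix i j assume "e i = e j"
    then have "(2::real) ^ (K + i) = 2 ^ (K + j)" by (simp add: e_def)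
    then show "i = j" by (simp add: power_inject_exp)
  qed
  moreover have "e i \<in> dyadics \<and> d < e i \<and> e i < h" for i
  proof (intro conjI)
    show "d < e i" by (simp add: e_def)
    show "e i < h" using small[of i] by (simp add: e_def)
    define b where "b = a * 2 ^ (K + i - n) + 1"
    have eb: "e i = real b / 2 ^ (K + i)"
    proof -
      have "(2::real) ^ (K + i) = 2 ^ n * 2 ^ (K + i - n)"
        by (simp add: power_add[symmetric] K_def)
      then show ?thesis by (simp add: e_def dd b_def field_simps)
    qed
    have "e i < 1"
    proof -
      have "d \<le> 1 - 1 / 2 ^ n"
      proof -
        have "(0::nat) < 2 ^ n" by simp
        then have "a + 1 \<le> 2 ^ n" using dd(3) by linarith
        then have "real (a + 1) \<le> real (2 ^ n)" by (simp only: of_nat_le_iff)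
        then have "real a \<le> 2 ^ n - 1" by simp
        then show ?thesis by (simp add: dd field_simps)
      qed
      moreover have "1 / 2 ^ (K + i) < (1::real) / 2 ^ n"
      proof -
        have "N \<noteq> 0" using N by (cases N) auto
        then have "n < K + i" by (simp add: K_def)
        then have "(2::real) ^ n < 2 ^ (K + i)" by (rule power_strict_increasing) simp
        then show ?thesis by (simp add: divide_simps)
      qed
      ultimately show ?thesis by (simp add: e_def)
    qed
    then have "real b < 2 ^ (K + i)" using eb by (simp add: divide_less_eq)
    then have "real b < real (2 ^ (K + i))" by simp
    then have "b < 2 ^ (K + i)" by (simp only: of_nat_less_iff)
    then have "b \<le> 2 ^ (K + i) - 1" by simp
    moreover have "1 \<le> K + i" using dd(2) by (simp add: K_def)
    ultimately show "e i \<in> dyadics" unfolding dyadics_def using eb by blast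
  qed
  ultimately show ?thesis by blast
qed

lemma partition_interval:
  assumes "std_dyadic_partition ds" "0 \<le> d" "d < 1"
  shows "\<exists>j. j + 1 < length ds \<and> ds ! j \<le> d \<and> d < ds ! (j + 1)"
proof -
  have P: "2 \<le> length ds" "ds ! 0 = 0" "last ds = 1" using assms(1) by (auto simp: std_dyadic_partition_def)
  define S where "S = {j. j + 1 < length ds \<and> ds ! j \<le> d}"
  have fin: "finite S" by (rule finite_subset[of _ "{..<length ds}"]) (auto simp: S_def)
  have "0 \<in> S" using P assms by (auto simp: S_def)
  define j where "j = Max S"
  have jS: "j \<in> S" unfolding j_def by (rule Max_in[OF fin]) (use \<open>0 \<in> S\<close> in auto)
  have "d < ds ! (j + 1)"
  proof (cases "j + 2 < length ds")
    case True
    then have "j + 1 \<notin> S" using Max_ge[OF fin, of "j+1"] by (auto simp: j_def)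
    with True show ?thesis by (auto simp: S_def)
  next
    case False
    with jS have "j + 1 = length ds - 1" by (auto simp: S_def)
    moreover have "ds \<noteq> []" using P by auto
    ultimately have "ds ! (j + 1) = last ds" by (simp add: last_conv_nth)
    then show ?thesis using P assms by simp
  qed
  with jS show ?thesis by (auto simp: S_def)
qed

lemma Gfr_local:
  assumes "g \<in> Gfr" "d \<in> dyadics"
  shows "\<exists>h>d. \<forall>d'\<in>dyadics. d \<le> d' \<and> d' < h \<longrightarrow> g d' = g d"
proof -
  from assms(1) obtain ds where ds: "std_dyadic_partition ds"
    and c: "\<forall>j. j + 1 < length ds \<longrightarrow> (\<exists>c. \<forall>d\<in>dyadics. ds ! j \<le> d \<and> d < ds ! (j + 1) \<longrightarrow> g d = c)"
    by (auto simp: Gfr_def)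
  obtain j where j: "j + 1 < length ds" "ds ! j \<le> d" "d < ds ! (j + 1)"
    using partition_interval[OF ds] dyadics_range[OF assms(2)] by blast
  obtain cc where cc: "\<forall>d\<in>dyadics. ds ! j \<le> d \<and> d < ds ! (j + 1) \<longrightarrow> g d = cc" using c j(1) by blast
  have "g d = cc" using cc j assms(2) by blast
  show ?thesis
    by (rule exI[of _ "ds ! (j+1)"]) (use j cc \<open>g d = cc\<close> in auto)
qed

lemma sum_shift_add:
  fixes h :: "'g::ab_group_add" and a k :: nat
  shows "(\<Sum>i<a + k. h) = (\<Sum>i<a. h) + (\<Sum>i<k. h)"
  by (induction k) (simp_all add: add.assoc)

lemma torsion_translate:
  fixes m :: "'g::{ab_group_add, countable} measure"
  assumes mP: "prob_space m" and s: "sets m = sets (count_space UNIV)"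
    and pos: "\<And>c. emeasure m {c} > 0" and tf: "torsion_free TYPE('g)"
    and cc: "c \<noteq> c'"
  shows "translate c m \<noteq> translate c' m"
proof
  assume eq: "translate c m = translate c' m"
  interpret prob_space m by (rule mP)
  have spm: "space m = UNIV" using sets_eq_imp_space_eq[OF s] by simp
  have meas_all: "f \<in> measurable m m" for f :: "'g \<Rightarrow> 'g"
    by (simp add: measurable_cong_sets[OF s s])
  have tr: "emeasure (translate b m) {x} = emeasure m {x - b}" for b x
  proof -
    have "(\<lambda>y. b + y) -` {x} \<inter> space m = {x - b}" by (auto simp: spm algebra_simps)
    then show ?thesis unfolding translate_def
      by (subst emeasure_distr[OF meas_all]) (auto simp: s)
  qed
  define h where "h = c - c'"
  have h0: "h \<noteq> 0" using cc by (simp add: h_def)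
  have shift: "emeasure m {z + h} = emeasure m {z}" for z
    using tr[of c "z + c"] tr[of c' "z + c"] eq by (simp add: h_def algebra_simps)
  define sq where "sq = (\<lambda>n::nat. (\<Sum>i<n. h))"
  have sqm: "emeasure m {sq n} = emeasure m {0}" for n
  proof (induction n)
    case (Suc n)
    have "sq (Suc n) = sq n + h" by (simp add: sq_def add.commute)
    then show ?case using shift[of "sq n"] Suc by simp
  qed (simp add: sq_def)
  have inj: "inj sq"
  proof (rule injI)
    have lt: "sq a \<noteq> sq b" if "a < b" for a b
    proof
      assume "sq a = sq b"
      moreover have "sq b = sq a + sq (b - a)" using that sum_shift_add[of h a "b - a"]
        by (simp add: sq_def)
      ultimately have "(\<Sum>i<b - a. h) = 0" by (simp add: sq_def)
      moreover have "0 < b - a" using that by simp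
      ultimately have "h = 0" using tf unfolding torsion_free_def by blast
      with h0 show False by simp
    qed
    fix a b assume "sq a = sq b"
    with lt[of a b] lt[of b a] show "a = b" by (cases a b rule: linorder_cases) auto
  qed
  define p where "p = measure m {0}"
  have pp: "p > 0" using pos[of 0] by (simp add: p_def emeasure_eq_measure)
  have "real N * p \<le> 1" for N
  proof -
    have "measure m (sq ` {..<N}) = (\<Sum>x\<in>sq ` {..<N}. measure m {x})"
      by (rule measure_eq_sum_singleton) (auto simp: s)
    also have "\<dots> = (\<Sum>i<N. measure m {sq i})"
      by (subst sum.reindex) (use inj in \<open>auto intro: inj_on_subset\<close>)
    also have "\<dots> = real N * p"
      using sqm by (simp add: p_def measure_def)
    finally show ?thesis using prob_le_1[of "sq ` {..<N}"] by simp
  qed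
  moreover obtain N where "1 / p < real N" using reals_Archimedean2 by blast
  then have "1 < real N * p" using pp by (simp add: field_simps)
  ultimately show False by (metis not_le)
qed

lemma singular_of_seq:
  fixes m :: "'g::{ab_group_add, countable} measure" and e :: "nat \<Rightarrow> real"
  assumes mP: "prob_space m" and s: "sets m = sets (count_space UNIV)"
    and e: "inj e" "\<And>i. e i \<in> dyadics" "\<And>i. g (e i) = c" "\<And>i. g' (e i) = c'"
    and ne: "translate c m \<noteq> translate c' m"
  shows "mutually_singular (push_fr g m) (push_fr g' m)"
proof -
  have spm: "space m = UNIV" using sets_eq_imp_space_eq[OF s] by simp
  have meas_all: "f \<in> measurable m m" for f :: "'g \<Rightarrow> 'g"
    by (simp add: measurable_cong_sets[OF s s])
  have tP: "prob_space (translate b m)" for b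
    unfolding translate_def by (rule prob_space.prob_space_distr[OF mP meas_all])
  have ts: "sets (translate b m) = sets (count_space UNIV)" for b
    by (simp add: translate_sets s)
  let ?M = "\<lambda>d. translate (g d) m" and ?M' = "\<lambda>d. translate (g' d) m"
  let ?t = "\<lambda>\<omega>. \<lambda>n\<in>UNIV. \<omega> (e n)"
  have R: "distr (PiM dyadics ?M) (PiM UNIV (\<lambda>_::nat. translate c m)) ?t = PiM UNIV (\<lambda>_::nat. translate c m)"
    using distr_PiM_reindex[of dyadics ?M e UNIV] tP e by simp
  have R': "distr (PiM dyadics ?M') (PiM UNIV (\<lambda>_::nat. translate c' m)) ?t = PiM UNIV (\<lambda>_::nat. translate c' m)"
    using distr_PiM_reindex[of dyadics ?M' e UNIV] tP e by simp
  have tm: "?t \<in> measurable (PiM dyadics ?M) (PiM UNIV (\<lambda>_::nat. translate c m))"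
  proof (rule measurable_restrict)
    fix i :: nat
    show "(\<lambda>\<omega>. \<omega> (e i)) \<in> measurable (PiM dyadics ?M) (translate c m)"
      using measurable_component_singleton[of "e i" dyadics ?M] e by simp
  qed
  have tm': "?t \<in> measurable (PiM dyadics ?M') (PiM UNIV (\<lambda>_::nat. translate c' m))"
  proof (rule measurable_restrict)
    fix i :: nat
    show "(\<lambda>\<omega>. \<omega> (e i)) \<in> measurable (PiM dyadics ?M') (translate c' m)"
      using measurable_component_singleton[of "e i" dyadics ?M'] e by simp
  qed
  obtain A where A: "A \<in> sets (PiM UNIV (\<lambda>_::nat. translate c m))"
    "emeasure (PiM UNIV (\<lambda>_::nat. translate c m)) A = 0"
    "emeasure (PiM UNIV (\<lambda>_::nat. translate c' m)) (space (PiM UNIV (\<lambda>_::nat. translate c' m)) - A) = 0"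
    using iid_singular[OF tP tP ts ts ne] by blast
  have sets_eq: "sets (PiM dyadics ?M) = sets (PiM dyadics ?M')"
    by (rule sets_PiM_cong) (auto simp: ts)
  have sp_eq: "space (PiM dyadics ?M) = space (PiM dyadics ?M')"
    by (rule sets_eq_imp_space_eq[OF sets_eq])
  have setsU: "sets (PiM UNIV (\<lambda>_::nat. translate c' m)) = sets (PiM UNIV (\<lambda>_::nat. translate c m))"
    by (rule sets_PiM_cong) (auto simp: ts)
  have spU: "space (PiM UNIV (\<lambda>_::nat. translate c' m)) = space (PiM UNIV (\<lambda>_::nat. translate c m))"
    by (rule sets_eq_imp_space_eq[OF setsU])
  define A' where "A' = ?t -` A \<inter> space (PiM dyadics ?M)"
  have A'sets: "A' \<in> sets (PiM dyadics ?M)"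
    unfolding A'_def by (rule measurable_sets[OF tm A(1)])
  have "emeasure (PiM dyadics ?M) A' = emeasure (distr (PiM dyadics ?M) (PiM UNIV (\<lambda>_::nat. translate c m)) ?t) A"
    unfolding A'_def by (rule emeasure_distr[symmetric, OF tm A(1)])
  then have A'0: "emeasure (PiM dyadics ?M) A' = 0" using R A(2) by simp
  have A2: "space (PiM UNIV (\<lambda>_::nat. translate c' m)) - A \<in> sets (PiM UNIV (\<lambda>_::nat. translate c' m))"
    using A(1) setsU by auto
  have "space (PiM dyadics ?M') - A' = ?t -` (space (PiM UNIV (\<lambda>_::nat. translate c' m)) - A) \<inter> space (PiM dyadics ?M')"
    using measurable_space[OF tm'] unfolding A'_def sp_eq by auto
  then have "emeasure (PiM dyadics ?M') (space (PiM dyadics ?M') - A')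
      = emeasure (distr (PiM dyadics ?M') (PiM UNIV (\<lambda>_::nat. translate c' m)) ?t) (space (PiM UNIV (\<lambda>_::nat. translate c' m)) - A)"
    by (simp add: emeasure_distr[OF tm' A2])
  then have A'1: "emeasure (PiM dyadics ?M') (space (PiM dyadics ?M') - A') = 0" using R' A(3) by simp
  show ?thesis
    unfolding mutually_singular_def push_eq[OF mP s]
    using A'sets A'0 A'1 sets_eq by blast
qed

lemma not_self_singular:
  assumes "prob_space M" shows "\<not> mutually_singular M M"
proof
  assume "mutually_singular M M"
  then obtain A where A: "A \<in> sets M" "emeasure M A = 0" "emeasure M (space M - A) = 0"
    by (auto simp: mutually_singular_def)
  interpret prob_space M by fact
  have "emeasure M (space M) = emeasure M A + emeasure M (space M - A)"
    using A(1) by (subst plus_emeasure) (auto dest: sets.sets_into_space simp: Un_absorb1)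
  then show False using A emeasure_space_1 by simp
qed

lemma push_cong:
  fixes m :: "'g::{ab_group_add, countable} measure"
  assumes mP: "prob_space m" and s: "sets m = sets (count_space UNIV)"
    and "\<forall>d\<in>dyadics. translate (g d) m = translate (g' d) m"
  shows "push_fr g m = push_fr g' m"
  unfolding push_eq[OF mP s] by (rule PiM_cong) (use assms in auto)

lemma push_prob:
  fixes m :: "'g::{ab_group_add, countable} measure"
  assumes mP: "prob_space m" and s: "sets m = sets (count_space UNIV)"
  shows "prob_space (push_fr g m)"
proof -
  have meas_all: "f \<in> measurable m m" for f :: "'g \<Rightarrow> 'g"
    by (simp add: measurable_cong_sets[OF s s])
  have tP: "prob_space (translate b m)" for b
    unfolding translate_def by (rule prob_space.prob_space_distr[OF mP meas_all])
  show ?thesis unfolding push_eq[OF mP s] by (rule prob_space_PiM) (use tP in auto)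
qed

lemma singular_iff:
  fixes m :: "'g::{ab_group_add, countable} measure"
  assumes mP: "prob_space m" and s: "sets m = sets (count_space UNIV)"
    and g: "g \<in> Gfr" and g': "g' \<in> Gfr"
  shows "mutually_singular (push_fr g m) (push_fr g' m) \<longleftrightarrow>
               (\<exists>d\<in>dyadics. translate (g d) m \<noteq> translate (g' d) m)"
proof
  assume sing: "mutually_singular (push_fr g m) (push_fr g' m)"
  show "\<exists>d\<in>dyadics. translate (g d) m \<noteq> translate (g' d) m"
  proof (rule ccontr)
    assume "\<not> ?thesis"
    then have "push_fr g m = push_fr g' m" by (intro push_cong[OF mP s]) auto
    with sing not_self_singular[OF push_prob[OF mP s, of g']] show False by simp
  qed
next
  assume "\<exists>d\<in>dyadics. translate (g d) m \<noteq> translate (g' d) m"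
  then obtain d where d: "d \<in> dyadics" "translate (g d) m \<noteq> translate (g' d) m" by blast
  obtain h where h: "h > d" "\<forall>d'\<in>dyadics. d \<le> d' \<and> d' < h \<longrightarrow> g d' = g d"
    using Gfr_local[OF g d(1)] by blast
  obtain h' where h': "h' > d" "\<forall>d'\<in>dyadics. d \<le> d' \<and> d' < h' \<longrightarrow> g' d' = g' d"
    using Gfr_local[OF g' d(1)] by blast
  obtain e :: "nat \<Rightarrow> real" where e: "inj e" "\<forall>i. e i \<in> dyadics \<and> d < e i \<and> e i < min h h'"
    using dyadic_seq[OF d(1), of "min h h'"] h(1) h'(1) by auto
  show "mutually_singular (push_fr g m) (push_fr g' m)"
  proof (rule singular_of_seq[OF mP s e(1)])
    show "e i \<in> dyadics" for i using e(2) by blast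
    show "g (e i) = g d" for i using e(2) h(2) by fastforce
    show "g' (e i) = g' d" for i using e(2) h'(2) by fastforce
  qed (rule d(2))
qed

theorem lemma3p9:
  fixes m :: "'g::{ab_group_add, countable} measure"
  assumes "prob_space m"
    and "sets m = sets (count_space UNIV)"
    and "\<And>c. emeasure m {c} > 0"
  shows "(\<forall>g\<in>Gfr. \<forall>g'\<in>Gfr.
            (mutually_singular (push_fr g m) (push_fr g' m) \<longleftrightarrow>
               (\<exists>d\<in>dyadics. translate (g d) m \<noteq> translate (g' d) m)) \<and>
            ((\<forall>d\<in>dyadics. translate (g d) m = translate (g' d) m) \<longrightarrow>
               push_fr g m = push_fr g' m))
       \<and> (torsion_free TYPE('g) \<longrightarrow>
            (\<forall>g\<in>Gfr. \<forall>g'\<in>Gfr. g \<noteq> g' \<longrightarrow> mutually_singular (push_fr g m) (push_fr g' m)))"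
proof (intro conjI ballI impI)
  fix g g' :: "real \<Rightarrow> 'g" assume g: "g \<in> Gfr" and g': "g' \<in> Gfr"
  show "mutually_singular (push_fr g m) (push_fr g' m) \<longleftrightarrow>
               (\<exists>d\<in>dyadics. translate (g d) m \<noteq> translate (g' d) m)"
    by (rule singular_iff[OF assms(1,2) g g'])
  show "(\<forall>d\<in>dyadics. translate (g d) m = translate (g' d) m) \<Longrightarrow> push_fr g m = push_fr g' m"
    by (rule push_cong[OF assms(1,2)])
next
  fix g g' :: "real \<Rightarrow> 'g" assume tf: "torsion_free TYPE('g)"
    and g: "g \<in> Gfr" and g': "g' \<in> Gfr" and ne: "g \<noteq> g'"
  have "\<exists>d\<in>dyadics. g d \<noteq> g' d"
  proof (rule ccontr)
    assume "\<not> ?thesis"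
    moreover have "g \<in> extensional dyadics" "g' \<in> extensional dyadics" using g g' by (auto simp: Gfr_def)
    ultimately have "g = g'" by (intro extensionalityI) auto
    with ne show False by simp
  qed
  then obtain d where d: "d \<in> dyadics" "g d \<noteq> g' d" by blast
  have "translate (g d) m \<noteq> translate (g' d) m"
    by (rule torsion_translate[OF assms tf d(2)])
  with d(1) show "mutually_singular (push_fr g m) (push_fr g' m)"
    using singular_iff[OF assms(1,2) g g'] by blast
qed

end
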